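(* For $x\in(0,1)$, let $\lambda\in\mathbb{R}$ be the solution of $x=e^{-e^{\lambda}}(e^{\lambda}+1)$. Then $$\lambda-\log(-\log x)\le\log\tfrac23+\log\Big(1+\sqrt{1-\tfrac{9}{2\log x}}\Big)$$ and $$\lambda-\log(-\log x)\ge-\log 2+\log\Big(1+\sqrt{1-\tfrac{8}{\log x}}\Big).$$
   Context: $\log$ denotes the natural logarithm. *)

theory Defs
  imports Complex_Main
begin

end

theory Submission
  imports Defs
begin

lemma ln_lower:
  fixes t :: real assumes t: "0 \<le> t"
  shows "2*t/(2+t) \<le> ln (1+t)"
proof -
  let ?f = "\<lambda>s::real. ln (1+s) - 2*s/(2+s)"
  have "?f 0 \<le> ?f t"
  proof (rule DERIV_nonneg_imp_increasing_open[OF t])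
    fix s :: real assume s: "0 < s" "s < t"
    have d: "DERIV ?f s :> (1/(1+s) - (2*(2+s) - 2*s*1)/(2+s)^2)"
      using s by (auto intro!: derivative_eq_intros simp: power2_eq_square)
    have "1/(1+s) - (2*(2+s) - 2*s*1)/(2+s)^2 = s^2/((1+s)*(2+s)^2)"
    proof -
      have "1+s \<noteq> 0" "2+s \<noteq> 0" using s by auto
      then show ?thesis by (simp add: divide_simps) algebra
    qed
    also have "\<dots> \<ge> 0" using s by simp
    finally show "\<exists>y. DERIV ?f s :> y \<and> y \<ge> 0" using d by blast
  next
    show "continuous_on {0..t} ?f"
      by (auto intro!: continuous_intros)
  qed
  then show ?thesis by simp
qed

lemma ln_upper:
  fixes t :: real assumes t: "0 \<le> t"
  shows "ln (1+t) \<le> t*(6+t)/(6+4*t)"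
proof -
  let ?f = "\<lambda>s::real. s*(6+s)/(6+4*s) - ln (1+s)"
  have "?f 0 \<le> ?f t"
  proof (rule DERIV_nonneg_imp_increasing_open[OF t])
    fix s :: real assume s: "0 < s" "s < t"
    have d: "DERIV ?f s :> (((1*(6+s) + s*1)*(6+4*s) - s*(6+s)*4)/(6+4*s)^2 - 1/(1+s))"
      using s by (auto intro!: derivative_eq_intros simp: power2_eq_square)
    have "((1*(6+s) + s*1)*(6+4*s) - s*(6+s)*4)/(6+4*s)^2 - 1/(1+s) = 4*s^3/((6+4*s)^2*(1+s))"
    proof -
      have "1+s \<noteq> 0" "6+4*s \<noteq> 0" using s by auto
      then show ?thesis by (simp add: divide_simps) algebra
    qed
    also have "\<dots> \<ge> 0" using s by simp
    finally show "\<exists>y. DERIV ?f s :> y \<and> y \<ge> 0" using d by blast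
  next
    show "continuous_on {0..t} ?f"
      using t by (auto intro!: continuous_intros)
  qed
  then show ?thesis by simp
qed

theorem lemma1:
  fixes x l :: real
  assumes "0 < x" and "x < 1"
    and "x = exp (- exp l) * (exp l + 1)"
  shows "l - ln (- ln x) \<le> ln (2/3) + ln (1 + sqrt (1 - 9 / (2 * ln x)))
    \<and> l - ln (- ln x) \<ge> - ln 2 + ln (1 + sqrt (1 - 8 / ln x))"
proof -
  define t where "t = exp l"
  have t0: "t > 0" by (simp add: t_def)
  define L where "L = t - ln (1+t)"
  have "x = exp (- t) * (1 + t)" using assms(3) unfolding t_def by simp
  then have "ln x = ln (exp (- t)) + ln (1+t)" using t0 by (simp add: ln_mult)
  then have lnx: "ln x = - L" unfolding L_def by simp
  have "ln x < 0" using assms(1,2) by simp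
  then have L0: "L > 0" using lnx by simp
  have lo: "2*t/(2+t) \<le> ln (1+t)" using ln_lower t0 by simp
  have up: "ln (1+t) \<le> t*(6+t)/(6+4*t)" using ln_upper t0 by simp
  have key: "l - ln (- ln x) = ln (t/L)" using L0 t0 lnx
    by (simp add: ln_div t_def)
  have tL: "t > L" using t0 unfolding L_def by simp
  have U: "t/L \<le> 2/3 * (1 + sqrt (1 + 9/(2*L)))"
  proof (cases "3*t/(2*L) - 1 \<le> 0")
    case True
    have "3*t \<le> 2*L" using True L0 by (simp add: field_simps)
    then show ?thesis using tL L0 by linarith
  next
    case False
    have "L \<ge> 3*t^2/(4*t+6)" using up t0 unfolding L_def
      by (simp add: field_simps power2_eq_square)
    then have h: "3*t^2 \<le> L*(4*t+6)" using t0 by (simp add: field_simps)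
    have "(3*t/(2*L) - 1)^2 \<le> 1 + 9/(2*L)"
    proof -
      have "(3*t/(2*L) - 1)^2 = (3*t - 2*L)^2/(4*L^2)" using L0
        by (simp add: field_simps power2_eq_square)
      also have "\<dots> \<le> (4*L^2 + 18*L)/(4*L^2)" using h L0
        by (intro divide_right_mono) (auto simp: power2_eq_square algebra_simps)
      also have "\<dots> = 1 + 9/(2*L)" using L0 by (simp add: field_simps power2_eq_square)
      finally show ?thesis .
    qed
    then have "3*t/(2*L) - 1 \<le> sqrt (1 + 9/(2*L))"
      using False by (metis abs_le_D1 real_le_rsqrt real_sqrt_abs)
    then show ?thesis using L0 by (simp add: field_simps)
  qed
  have "0 < 1 + 9/(2*L)" "0 < 1 + 8/L" using L0 by (intro add_pos_pos; simp)+
  then have S: "0 < sqrt (1 + 9/(2*L))" and S2: "0 < sqrt (1 + 8/L)"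
    using real_sqrt_gt_zero by blast+
  have Lo: "1/2 * (1 + sqrt (1 + 8/L)) \<le> t/L"
  proof -
    have "L \<le> t^2/(t+2)" using lo t0 unfolding L_def
      by (simp add: field_simps power2_eq_square)
    then have h: "L*(t+2) \<le> t^2" using t0 by (simp add: field_simps)
    have "1 + 8/L \<le> (2*t/L - 1)^2"
    proof -
      have "1 + 8/L = (L^2 + 8*L)/L^2" using L0 by (simp add: field_simps power2_eq_square)
      also have "\<dots> \<le> (2*t - L)^2/L^2" using h L0
        by (intro divide_right_mono) (auto simp: power2_eq_square algebra_simps)
      also have "\<dots> = (2*t/L - 1)^2" using L0 by (simp add: field_simps power2_eq_square)
      finally show ?thesis .
    qed
    moreover have "2*t/L - 1 \<ge> 0" using tL L0 by (simp add: field_simps)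
    ultimately have "sqrt (1 + 8/L) \<le> 2*t/L - 1"
      by (metis real_sqrt_le_mono real_sqrt_abs abs_of_nonneg)
    then show ?thesis by (simp add: field_simps)
  qed
  have "ln (t/L) \<le> ln (2/3 * (1 + sqrt (1 + 9/(2*L))))"
    using U L0 t0 S by (subst ln_le_cancel_iff) (auto simp del: real_sqrt_gt_0_iff)
  also have "\<dots> = ln (2/3) + ln (1 + sqrt (1 + 9/(2*L)))"
    by (rule ln_mult_pos) (use S in \<open>auto simp del: real_sqrt_gt_0_iff\<close>)
  finally have A: "ln (t/L) \<le> ln (2/3) + ln (1 + sqrt (1 + 9/(2*L)))" .
  have "- ln 2 + ln (1 + sqrt (1 + 8/L)) = ln (1/2 * (1 + sqrt (1 + 8/L)))"
  proof -
    have "ln (1/2 * (1 + sqrt (1 + 8/L))) = ln (1/2) + ln (1 + sqrt (1 + 8/L))"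
      by (rule ln_mult_pos) (use S2 in \<open>auto simp del: real_sqrt_gt_0_iff\<close>)
    then show ?thesis by (simp add: ln_div)
  qed
  also have "\<dots> \<le> ln (t/L)" using Lo S2 L0 t0 by (subst ln_le_cancel_iff) (auto simp del: real_sqrt_gt_0_iff)
  finally have B: "- ln 2 + ln (1 + sqrt (1 + 8/L)) \<le> ln (t/L)" .
  show ?thesis using A B key lnx by simp
qed

end
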